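(* Let $\psi:\mathcal{Q}\to\mathcal{P}$ be a full upper semilattice morphism with $\mathcal{Q}$ finite and $\uparrow\psi(\mathcal{Q})=\mathcal{P}$. For all $A,B\subseteq\mathcal{Q}$ such that every $b\in B$ satisfies $a\le b$ for some $a\in A$, we have \[ \mathrm{Lan}_\psi\big(\mathbb{k}_{\uparrow A\setminus\uparrow B}\big)\cong\mathbb{k}_{\uparrow\psi(A)\setminus\uparrow\psi(B)}, \] where upsets are taken in $\mathcal{Q}$ and $\mathcal{P}$ respectively. In particular, $\mathrm{Lan}_\psi$ maps spread-decomposable representations to spread-decomposable representations.
   Context: Fix a field $\mathbb{k}$. Upper semilattice, full morphism, upper semilattice morphism as usual (joins of finite nonempty sets exist/are preserved; $\psi(q)\le\psi(q')\Rightarrow q\le q'$). $\uparrow X=\{p:\exists x\in X,x\le p\}$. For convex $S$ (i.e. $s\le p\le s'$ with $s,s'\in S$ implies $p\in S$), $\mathbb{k}_S$ is the indicator representation. $\mathrm{Lan}_\psi:\operatorname{rep}\mathcal{Q}\to\operatorname{rep}\mathcal{P}$ is the left adjoint of restriction $M\mapsto M\circ\psi$, and equals precomposition with $\lfloor-\rfloor_\psi$, where $\lfloor p\rfloor_\psi=\bigvee\{q:\psi(q)\le p\}$. A spread is a nonempty convex, zigzag-connected subset; a representation is spread-decomposable if it is isomorphic to a finite direct sum of finitely presented spread representations $\mathbb{k}_S$. *)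

theory Defs
  imports Complex_Main "HOL-Library.Function_Algebras"
begin

definition up :: "'a::order set \<Rightarrow> 'a set" where
  "up X = {p. \<exists>x\<in>X. x \<le> p}"

definition poset_convex :: "'a::order set \<Rightarrow> bool" where
  "poset_convex S \<longleftrightarrow> (\<forall>s\<in>S. \<forall>t\<in>S. \<forall>p. s \<le> p \<and> p \<le> t \<longrightarrow> p \<in> S)"

definition zigzag_connected :: "'a::order set \<Rightarrow> bool" where
  "zigzag_connected S \<longleftrightarrow>
     (\<forall>s\<in>S. \<forall>t\<in>S. (\<lambda>x y. x \<in> S \<and> y \<in> S \<and> (x \<le> y \<or> y \<le> x))\<^sup>*\<^sup>* s t)"

definition is_spread :: "'a::order set \<Rightarrow> bool" where
  "is_spread S \<longleftrightarrow> S \<noteq> {} \<and> poset_convex S \<and> zigzag_connected S"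

text \<open>A representation of a poset over a field 'k, with respect to a scalar
  multiplication s on an ambient type 'v: a family of subspaces V p together with
  structure maps f p q (meaningful for p \<le> q, on V p).\<close>

type_synonym ('a, 'v) rep = "('a \<Rightarrow> 'v set) \<times> ('a \<Rightarrow> 'a \<Rightarrow> 'v \<Rightarrow> 'v)"

definition lin_on :: "('k \<Rightarrow> 'v::ab_group_add \<Rightarrow> 'v) \<Rightarrow> ('k \<Rightarrow> 'w::ab_group_add \<Rightarrow> 'w)
    \<Rightarrow> 'v set \<Rightarrow> ('v \<Rightarrow> 'w) \<Rightarrow> bool" where
  "lin_on s1 s2 V g \<longleftrightarrow> (\<forall>x\<in>V. \<forall>y\<in>V. g (x + y) = g x + g y) \<and> (\<forall>c. \<forall>x\<in>V. g (s1 c x) = s2 c (g x))"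

definition is_rep :: "('k::field \<Rightarrow> 'v::ab_group_add \<Rightarrow> 'v) \<Rightarrow> ('a::order, 'v) rep \<Rightarrow> bool" where
  "is_rep s M \<longleftrightarrow> vector_space s \<and>
     (\<forall>p. 0 \<in> fst M p \<and> (\<forall>x\<in>fst M p. \<forall>y\<in>fst M p. x + y \<in> fst M p)
          \<and> (\<forall>c. \<forall>x\<in>fst M p. s c x \<in> fst M p)) \<and>
     (\<forall>p q. p \<le> q \<longrightarrow> (\<forall>x\<in>fst M p. snd M p q x \<in> fst M q) \<and> lin_on s s (fst M p) (snd M p q)) \<and>
     (\<forall>p. \<forall>x\<in>fst M p. snd M p p x = x) \<and>
     (\<forall>p q r. p \<le> q \<longrightarrow> q \<le> r \<longrightarrow> (\<forall>x\<in>fst M p. snd M q r (snd M p q x) = snd M p r x))"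

definition rep_iso :: "('k \<Rightarrow> 'v::ab_group_add \<Rightarrow> 'v) \<Rightarrow> ('a::order, 'v) rep
    \<Rightarrow> ('k \<Rightarrow> 'w::ab_group_add \<Rightarrow> 'w) \<Rightarrow> ('a, 'w) rep \<Rightarrow> bool" where
  "rep_iso s1 M s2 N \<longleftrightarrow> (\<exists>\<phi>. (\<forall>p. bij_betw (\<phi> p) (fst M p) (fst N p) \<and> lin_on s1 s2 (fst M p) (\<phi> p)) \<and>
     (\<forall>p q. p \<le> q \<longrightarrow> (\<forall>x\<in>fst M p. \<phi> q (snd M p q x) = snd N p q (\<phi> p x))))"

definition indicator_rep :: "'a::order set \<Rightarrow> ('a, 'k::field) rep" where
  "indicator_rep S = (\<lambda>p. if p \<in> S then UNIV else {0}, \<lambda>p q x. if p \<in> S \<and> q \<in> S then x else 0)"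

text \<open>Finite direct sum of indicator representations, realised inside nat \<Rightarrow> 'k.\<close>

definition fscale :: "'k::field \<Rightarrow> (nat \<Rightarrow> 'k) \<Rightarrow> (nat \<Rightarrow> 'k)" where
  "fscale c g = (\<lambda>i. c * g i)"

definition dsum_rep :: "'a::order set list \<Rightarrow> ('a, nat \<Rightarrow> 'k::field) rep" where
  "dsum_rep Ss = (\<lambda>p. {g. \<forall>i. g i \<noteq> 0 \<longrightarrow> i < length Ss \<and> p \<in> Ss ! i},
                  \<lambda>p q g i. if i < length Ss \<and> q \<in> Ss ! i then g i else 0)"

text \<open>Finitely presented: there are finitely many generators m_i in M(a_i) and finitely
  many relations r_j (elements of the kernel of the induced map from the free
  representation at b_j) generating the whole kernel; i.e. M is the cokernel of a
  morphism between finite direct sums of representations k_{up {x}}.\<close>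

definition gen_eval :: "('k \<Rightarrow> 'v::ab_group_add \<Rightarrow> 'v) \<Rightarrow> ('a::order, 'v) rep \<Rightarrow> nat \<Rightarrow> (nat \<Rightarrow> 'a)
    \<Rightarrow> (nat \<Rightarrow> 'v) \<Rightarrow> 'a \<Rightarrow> (nat \<Rightarrow> 'k) \<Rightarrow> 'v" where
  "gen_eval s M n a m p c = (\<Sum>i\<in>{i. i < n \<and> a i \<le> p}. s (c i) (snd M (a i) p (m i)))"

definition fin_pres :: "('k::field \<Rightarrow> 'v::ab_group_add \<Rightarrow> 'v) \<Rightarrow> ('a::order, 'v) rep \<Rightarrow> bool" where
  "fin_pres s M \<longleftrightarrow> (\<exists>(n::nat) (a::nat \<Rightarrow> 'a) (m::nat \<Rightarrow> 'v) (k::nat) (b::nat \<Rightarrow> 'a) (r::nat \<Rightarrow> nat \<Rightarrow> 'k).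
     (\<forall>i<n. m i \<in> fst M (a i)) \<and>
     (\<forall>p. fst M p = range (gen_eval s M n a m p)) \<and>
     (\<forall>p. {c. (\<forall>i. c i \<noteq> 0 \<longrightarrow> i < n \<and> a i \<le> p) \<and> gen_eval s M n a m p c = 0}
          = range (\<lambda>d. (\<lambda>i. \<Sum>j\<in>{j. j < k \<and> b j \<le> p}. d j * r j i))) \<and>
     (\<forall>j<k. (\<forall>i. r j i \<noteq> 0 \<longrightarrow> i < n \<and> a i \<le> b j) \<and> gen_eval s M n a m (b j) (r j) = 0))"

definition spread_decomposable :: "('k::field \<Rightarrow> 'v::ab_group_add \<Rightarrow> 'v) \<Rightarrow> ('a::order, 'v) rep \<Rightarrow> bool" where
  "spread_decomposable s M \<longleftrightarrow> (\<exists>Ss::'a set list.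
     (\<forall>S\<in>set Ss. is_spread S \<and> fin_pres ((*) :: 'k \<Rightarrow> 'k \<Rightarrow> 'k) (indicator_rep S)) \<and>
     rep_iso s M fscale (dsum_rep Ss))"

definition floor_psi :: "('q::{finite,semilattice_sup} \<Rightarrow> 'p::order) \<Rightarrow> 'p \<Rightarrow> 'q" where
  "floor_psi \<psi> p = Sup_fin {q. \<psi> q \<le> p}"

definition Lan :: "('q::{finite,semilattice_sup} \<Rightarrow> 'p::order) \<Rightarrow> ('q, 'v) rep \<Rightarrow> ('p, 'v) rep" where
  "Lan \<psi> M = (\<lambda>p. fst M (floor_psi \<psi> p), \<lambda>p p'. snd M (floor_psi \<psi> p) (floor_psi \<psi> p'))"

end

theory Submission
  imports Defs
begin

lemma psi_mono:
  assumes hom: "\<forall>a b. \<psi> (sup a b) = sup (\<psi> a) (\<psi> b)"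
  shows "(a::'q::semilattice_sup) \<le> b \<Longrightarrow> (\<psi> a :: 'p::semilattice_sup) \<le> \<psi> b"
proof -
  assume "a \<le> b"
  then have "b = sup a b" by (simp add: sup_absorb2)
  then have "\<psi> b = sup (\<psi> a) (\<psi> b)" using hom by metis
  then show ?thesis by (metis sup_ge1)
qed

lemma psi_Sup_fin_le:
  assumes hom: "\<forall>a b. \<psi> (sup a b) = sup (\<psi> a) (\<psi> b)"
  shows "finite X \<Longrightarrow> X \<noteq> {} \<Longrightarrow> (\<forall>x\<in>X. (\<psi> x :: 'p::semilattice_sup) \<le> p)
     \<Longrightarrow> \<psi> (Sup_fin (X::'q::semilattice_sup set)) \<le> p"
proof (induction X rule: finite_ne_induct)
  case (singleton x)
  then show ?case by simp
next
  case (insert x F)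
  then show ?case using hom by (simp add: Sup_fin.insert)
qed

lemma floor_gal:
  fixes \<psi> :: "'q::{finite,semilattice_sup} \<Rightarrow> 'p::semilattice_sup"
  assumes hom: "\<forall>a b. \<psi> (sup a b) = sup (\<psi> a) (\<psi> b)"
    and cover: "up (range \<psi>) = UNIV"
  shows "(q \<le> floor_psi \<psi> p) = (\<psi> q \<le> p)"
proof -
  have "p \<in> up (range \<psi>)" using cover by simp
  then obtain q0 where "\<psi> q0 \<le> p" unfolding up_def by blast
  then have ne: "{q. \<psi> q \<le> p} \<noteq> {}" by blast
  have fin: "finite {q. \<psi> q \<le> p}" by (rule finite)
  have all: "\<forall>x\<in>{q. \<psi> q \<le> p}. \<psi> x \<le> p" by blast
  have le: "\<psi> (floor_psi \<psi> p) \<le> p" unfolding floor_psi_def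
    by (rule psi_Sup_fin_le[OF hom fin ne all])
  show ?thesis
  proof
    assume "q \<le> floor_psi \<psi> p"
    then have "\<psi> q \<le> \<psi> (floor_psi \<psi> p)" by (rule psi_mono[OF hom])
    then show "\<psi> q \<le> p" using le by (rule order_trans)
  next
    assume "\<psi> q \<le> p"
    then show "q \<le> floor_psi \<psi> p" unfolding floor_psi_def
      by (intro Sup_fin.coboundedI[OF finite]) blast
  qed
qed

lemma floor_psi_psi:
  fixes \<psi> :: "'q::{finite,semilattice_sup} \<Rightarrow> 'p::semilattice_sup"
  assumes hom: "\<forall>a b. \<psi> (sup a b) = sup (\<psi> a) (\<psi> b)"
    and full: "\<forall>a b. \<psi> a \<le> \<psi> b \<longrightarrow> a \<le> b"
    and cover: "up (range \<psi>) = UNIV"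
  shows "floor_psi \<psi> (\<psi> q) = q"
proof -
  have "q \<le> floor_psi \<psi> (\<psi> q)" using floor_gal[OF hom cover] by simp
  moreover have "\<psi> (floor_psi \<psi> (\<psi> q)) \<le> \<psi> q"
    using floor_gal[OF hom cover, of "floor_psi \<psi> (\<psi> q)" "\<psi> q"] by simp
  then have "floor_psi \<psi> (\<psi> q) \<le> q" using full by blast
  ultimately show ?thesis by simp
qed

lemma floor_mono:
  fixes \<psi> :: "'q::{finite,semilattice_sup} \<Rightarrow> 'p::semilattice_sup"
  assumes hom: "\<forall>a b. \<psi> (sup a b) = sup (\<psi> a) (\<psi> b)"
    and cover: "up (range \<psi>) = UNIV"
  shows "p \<le> p' \<Longrightarrow> floor_psi \<psi> p \<le> floor_psi \<psi> p'"
proof -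
  assume pp: "p \<le> p'"
  have "\<psi> (floor_psi \<psi> p) \<le> p"
    using floor_gal[OF hom cover, of "floor_psi \<psi> p" p] by simp
  then have "\<psi> (floor_psi \<psi> p) \<le> p'" using pp by (rule order_trans)
  then show ?thesis using floor_gal[OF hom cover, of "floor_psi \<psi> p" p'] by simp
qed

lemma Lan_indicator:
  "Lan \<psi> (indicator_rep S) = indicator_rep {p. floor_psi \<psi> p \<in> S}"
  unfolding Lan_def indicator_rep_def by auto

lemma Lan_dsum:
  "Lan \<psi> (dsum_rep Ss) = dsum_rep (map (\<lambda>S. {p. floor_psi \<psi> p \<in> S}) Ss)"
  unfolding Lan_def dsum_rep_def by (auto intro!: ext)

lemma f3_aux:
  fixes \<psi> :: "'q::{finite,semilattice_sup} \<Rightarrow> 'p::semilattice_sup"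
  and s :: "'k::field \<Rightarrow> 'v::ab_group_add \<Rightarrow> 'v" and M :: "('q, 'v) rep"
  and a b :: "nat \<Rightarrow> 'q" and r :: "nat \<Rightarrow> nat \<Rightarrow> 'k"
  assumes gal: "\<And>q p. (q \<le> floor_psi \<psi> p) = (\<psi> q \<le> p)"
  and h3: "{c. (\<forall>i. c i \<noteq> 0 \<longrightarrow> i < n \<and> a i \<le> floor_psi \<psi> p) \<and> gen_eval s M n a m (floor_psi \<psi> p) c = 0}
          = range (\<lambda>d. (\<lambda>i. \<Sum>j\<in>{j. j < k \<and> b j \<le> floor_psi \<psi> p}. d j * r j i))"
  shows "{c. (\<forall>i. c i \<noteq> 0 \<longrightarrow> i < n \<and> \<psi> (a i) \<le> p) \<and> gen_eval s M n a m (floor_psi \<psi> p) c = 0}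
          = range (\<lambda>d. (\<lambda>i. \<Sum>j\<in>{j. j < k \<and> \<psi> (b j) \<le> p}. d j * r j i))"
proof -
  have e1: "(a i \<le> floor_psi \<psi> p) = (\<psi> (a i) \<le> p)" for i by (rule gal)
  have e2: "(b j \<le> floor_psi \<psi> p) = (\<psi> (b j) \<le> p)" for j by (rule gal)
  show ?thesis using h3 unfolding e1 e2 .
qed

lemma fin_pres_Lan:
  fixes \<psi> :: "'q::{finite,semilattice_sup} \<Rightarrow> 'p::semilattice_sup"
  and s :: "'k::field \<Rightarrow> 'v::ab_group_add \<Rightarrow> 'v" and M :: "('q, 'v) rep"
  assumes gal: "\<And>q p. (q \<le> floor_psi \<psi> p) = (\<psi> q \<le> p)"
    and fl: "\<And>q. floor_psi \<psi> (\<psi> q) = q"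
    and fp: "fin_pres s M"
  shows "fin_pres s (Lan \<psi> M)"
proof -
  obtain n and a :: "nat \<Rightarrow> 'q" and m :: "nat \<Rightarrow> 'v" and k and b :: "nat \<Rightarrow> 'q"
    and r :: "nat \<Rightarrow> nat \<Rightarrow> 'k" where
    h1: "\<forall>i<n. m i \<in> fst M (a i)" and
    h2: "\<forall>p. fst M p = range (gen_eval s M n a m p)" and
    h3: "\<forall>p. {c. (\<forall>i. c i \<noteq> 0 \<longrightarrow> i < n \<and> a i \<le> p) \<and> gen_eval s M n a m p c = 0}
          = range (\<lambda>d. (\<lambda>i. \<Sum>j\<in>{j. j < k \<and> b j \<le> p}. d j * r j i))" and
    h4: "\<forall>j<k. (\<forall>i. r j i \<noteq> 0 \<longrightarrow> i < n \<and> a i \<le> b j) \<and> gen_eval s M n a m (b j) (r j) = 0"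
    using fp unfolding fin_pres_def
    apply (elim exE conjE)
    apply (rule that)
       apply assumption+
    done
  have ge: "\<And>p c. gen_eval s (Lan \<psi> M) n (\<psi> \<circ> a) m p c = gen_eval s M n a m (floor_psi \<psi> p) c"
    unfolding gen_eval_def Lan_def by (simp add: gal fl)
  have mono: "\<psi> x \<le> \<psi> y" if "x \<le> y" for x y
    using gal[of x "\<psi> y"] fl[of y] that by simp
  have f1: "\<forall>i<n. m i \<in> fst (Lan \<psi> M) ((\<psi> \<circ> a) i)" using h1 by (simp add: Lan_def fl)
  have f2: "\<forall>p. fst (Lan \<psi> M) p = range (gen_eval s (Lan \<psi> M) n (\<psi> \<circ> a) m p)"
    unfolding ge by (simp add: Lan_def h2)
  have f3: "\<forall>p. {c. (\<forall>i. c i \<noteq> 0 \<longrightarrow> i < n \<and> (\<psi> \<circ> a) i \<le> p) \<and> gen_eval s (Lan \<psi> M) n (\<psi> \<circ> a) m p c = 0}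
          = range (\<lambda>d. (\<lambda>i. \<Sum>j\<in>{j. j < k \<and> (\<psi> \<circ> b) j \<le> p}. d j * r j i))"
  proof
    fix p
    show "{c. (\<forall>i. c i \<noteq> 0 \<longrightarrow> i < n \<and> (\<psi> \<circ> a) i \<le> p) \<and> gen_eval s (Lan \<psi> M) n (\<psi> \<circ> a) m p c = 0}
          = range (\<lambda>d. (\<lambda>i. \<Sum>j\<in>{j. j < k \<and> (\<psi> \<circ> b) j \<le> p}. d j * r j i))"
      unfolding ge unfolding comp_def by (rule f3_aux[where \<psi>=\<psi> and s=s and M=M and a=a and b=b and r=r and n=n and m=m and k=k and p=p,
          OF gal h3[rule_format, of "floor_psi \<psi> p"]])
  qed
  have f4: "\<forall>j<k. (\<forall>i. r j i \<noteq> 0 \<longrightarrow> i < n \<and> (\<psi> \<circ> a) i \<le> (\<psi> \<circ> b) j) \<and>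
        gen_eval s (Lan \<psi> M) n (\<psi> \<circ> a) m ((\<psi> \<circ> b) j) (r j) = 0"
    using h4 by (simp add: ge fl mono)
  show ?thesis unfolding fin_pres_def
    apply (rule exI[of _ n], rule exI[of _ "\<psi> \<circ> a"], rule exI[of _ m], rule exI[of _ k],
        rule exI[of _ "\<psi> \<circ> b"], rule exI[of _ r])
    by (rule conjI[OF f1 conjI[OF f2 conjI[OF f3 f4]]])
qed

lemma rep_iso_Lan:
  fixes \<psi> :: "'q::{finite,semilattice_sup} \<Rightarrow> 'p::semilattice_sup"
  assumes fm: "\<And>p p'. p \<le> p' \<Longrightarrow> floor_psi \<psi> p \<le> floor_psi \<psi> p'"
    and ri: "rep_iso s1 M s2 N"
  shows "rep_iso s1 (Lan \<psi> M) s2 (Lan \<psi> N)"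
proof -
  obtain \<phi> where a: "\<forall>p. bij_betw (\<phi> p) (fst M p) (fst N p) \<and> lin_on s1 s2 (fst M p) (\<phi> p)"
    and b: "\<forall>p q. p \<le> q \<longrightarrow> (\<forall>x\<in>fst M p. \<phi> q (snd M p q x) = snd N p q (\<phi> p x))"
    using ri unfolding rep_iso_def by blast
  show ?thesis unfolding rep_iso_def
    apply (rule exI[of _ "\<lambda>p. \<phi> (floor_psi \<psi> p)"])
    using a b fm by (simp add: Lan_def)
qed

lemma spread_preimage:
  fixes \<psi> :: "'q::{finite,semilattice_sup} \<Rightarrow> 'p::semilattice_sup"
  assumes gal: "\<And>q p. (q \<le> floor_psi \<psi> p) = (\<psi> q \<le> p)"
    and fl: "\<And>q. floor_psi \<psi> (\<psi> q) = q"
    and sp: "is_spread S"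
  shows "is_spread {p. floor_psi \<psi> p \<in> S}"
proof -
  let ?S = "{p. floor_psi \<psi> p \<in> S}"
  have lefl: "\<psi> (floor_psi \<psi> p) \<le> p" for p
    using gal[of "floor_psi \<psi> p" p] by simp
  have fm: "floor_psi \<psi> p \<le> floor_psi \<psi> p'" if "p \<le> p'" for p p'
  proof -
    have "\<psi> (floor_psi \<psi> p) \<le> p'" using lefl[of p] that by (rule order_trans)
    then show ?thesis using gal[of "floor_psi \<psi> p" p'] by simp
  qed
  have mono: "\<psi> x \<le> \<psi> y" if "x \<le> y" for x y
    using gal[of x "\<psi> y"] fl[of y] that by simp
  have ne: "?S \<noteq> {}"
  proof -
    obtain s0 where "s0 \<in> S" using sp unfolding is_spread_def by blast
    then have "\<psi> s0 \<in> ?S" by (simp add: fl)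
    then show ?thesis by blast
  qed
  have cv: "poset_convex ?S" unfolding poset_convex_def
  proof (intro ballI allI impI)
    fix x y p assume x: "x \<in> ?S" and y: "y \<in> ?S" and xy: "x \<le> p \<and> p \<le> y"
    have c: "poset_convex S" using sp unfolding is_spread_def by blast
    have "floor_psi \<psi> x \<le> floor_psi \<psi> p" using xy fm by blast
    moreover have "floor_psi \<psi> p \<le> floor_psi \<psi> y" using xy fm by blast
    ultimately have "floor_psi \<psi> p \<in> S" using c x y unfolding poset_convex_def by blast
    then show "p \<in> ?S" by simp
  qed
  let ?R = "\<lambda>x y. x \<in> S \<and> y \<in> S \<and> (x \<le> y \<or> y \<le> x)"
  let ?R' = "\<lambda>x y. x \<in> ?S \<and> y \<in> ?S \<and> (x \<le> y \<or> y \<le> x)"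
  have tr: "?R\<^sup>*\<^sup>* x y \<Longrightarrow> ?R'\<^sup>*\<^sup>* (\<psi> x) (\<psi> y)" for x y
  proof (induction rule: rtranclp_induct)
    case base then show ?case by simp
  next
    case (step y z)
    then have "?R' (\<psi> y) (\<psi> z)" using fl mono by auto
    then show ?case using step.IH by (rule rtranclp.rtrancl_into_rtrancl[rotated])
  qed
  have zz: "zigzag_connected ?S" unfolding zigzag_connected_def
  proof (intro ballI)
    fix p p' assume p: "p \<in> ?S" and p': "p' \<in> ?S"
    have "?R\<^sup>*\<^sup>* (floor_psi \<psi> p) (floor_psi \<psi> p')" using sp p p'
      unfolding is_spread_def zigzag_connected_def by blast
    then have m: "?R'\<^sup>*\<^sup>* (\<psi> (floor_psi \<psi> p)) (\<psi> (floor_psi \<psi> p'))" by (rule tr)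
    have s1: "?R' p (\<psi> (floor_psi \<psi> p))" using p lefl fl by auto
    have s2: "?R' (\<psi> (floor_psi \<psi> p')) p'" using p' lefl fl by auto
    show "?R'\<^sup>*\<^sup>* p p'"
      using converse_rtranclp_into_rtranclp[OF s1 rtranclp.rtrancl_into_rtrancl[OF m s2]] .
  qed
  show ?thesis using ne cv zz unfolding is_spread_def by blast
qed

theorem mainTheorem9:
  fixes \<psi> :: "'q::{finite,semilattice_sup} \<Rightarrow> 'p::semilattice_sup"
  assumes hom: "\<forall>a b. \<psi> (sup a b) = sup (\<psi> a) (\<psi> b)"
    and full: "\<forall>a b. \<psi> a \<le> \<psi> b \<longrightarrow> a \<le> b"
    and cover: "up (range \<psi>) = UNIV"
  shows "(\<forall>A B :: 'q set. B \<subseteq> up A \<longrightarrow>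
            rep_iso ((*) :: 'k::field \<Rightarrow> 'k \<Rightarrow> 'k) (Lan \<psi> (indicator_rep (up A - up B)))
                    ((*) :: 'k \<Rightarrow> 'k \<Rightarrow> 'k) (indicator_rep (up (\<psi> ` A) - up (\<psi> ` B))))
       \<and> (\<forall>(s :: 'k \<Rightarrow> 'v::ab_group_add \<Rightarrow> 'v) (M :: ('q, 'v) rep).
            is_rep s M \<and> spread_decomposable s M \<longrightarrow> spread_decomposable s (Lan \<psi> M))"
proof (intro conjI allI impI)
  note gal = floor_gal[OF hom cover]
  note fl = floor_psi_psi[OF hom full cover]
  note fm = floor_mono[OF hom cover]
  fix A B :: "'q set"
  have eq: "{p. floor_psi \<psi> p \<in> up A - up B} = up (\<psi> ` A) - up (\<psi> ` B)"
    unfolding up_def by (auto simp: gal)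
  show "rep_iso ((*) :: 'k::field \<Rightarrow> 'k \<Rightarrow> 'k) (Lan \<psi> (indicator_rep (up A - up B)))
                    ((*) :: 'k \<Rightarrow> 'k \<Rightarrow> 'k) (indicator_rep (up (\<psi> ` A) - up (\<psi> ` B)))"
    unfolding Lan_indicator eq rep_iso_def
    by (rule exI[of _ "\<lambda>p x. x"]) (simp add: lin_on_def indicator_rep_def bij_betw_def)
next
  note gal = floor_gal[OF hom cover]
  note fl = floor_psi_psi[OF hom full cover]
  note fm = floor_mono[OF hom cover]
  fix s :: "'k \<Rightarrow> 'v::ab_group_add \<Rightarrow> 'v" and M :: "('q, 'v) rep"
  assume "is_rep s M \<and> spread_decomposable s M"
  then obtain Ss :: "'q set list" where
    h1: "\<forall>S\<in>set Ss. is_spread S \<and> fin_pres ((*) :: 'k \<Rightarrow> 'k \<Rightarrow> 'k) (indicator_rep S)" and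
    h2: "rep_iso s M fscale (dsum_rep Ss)"
    unfolding spread_decomposable_def by blast
  let ?Ss = "map (\<lambda>S. {p. floor_psi \<psi> p \<in> S}) Ss"
  show "spread_decomposable s (Lan \<psi> M)" unfolding spread_decomposable_def
  proof (intro exI[of _ ?Ss] conjI ballI)
    fix S' assume "S' \<in> set ?Ss"
    then obtain S where S: "S \<in> set Ss" and S': "S' = {p. floor_psi \<psi> p \<in> S}" by auto
    show "is_spread S'" unfolding S' using spread_preimage[OF gal fl] h1 S by blast
    show "fin_pres ((*) :: 'k \<Rightarrow> 'k \<Rightarrow> 'k) (indicator_rep S')"
      unfolding S' Lan_indicator[symmetric] using fin_pres_Lan[OF gal fl] h1 S by blast
  next
    show "rep_iso s (Lan \<psi> M) fscale (dsum_rep ?Ss)"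
      using rep_iso_Lan[OF fm h2] unfolding Lan_dsum .
  qed
qed

end
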